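(* Let $\mathcal{A}=\{A_1,\dots,A_l\}$ be a finite family of real $n\times n$ matrices, each with a strictly dominant eigenvalue $\lambda_i$, and let $\tilde r_i,\tilde h_i$, $\tilde R$, $\tilde H$, $\mathcal{K}_{inner}(\mathcal{A})=\{\tilde Rp:p\ge0\}$ and $\mathcal{K}_{outer}(\mathcal{A})=\{r:\tilde Hr\ge0\}$ be as constructed below. Fix $\tau_i>0$ and $w_i>0$ for each $i$, and define $$\tilde A_i:=I+\tau_i(A_i-\lambda_iI),\qquad W_i:=\tilde A_i-w_i\,\tilde r_i\tilde h_i^T.$$ Let $R^{(k)}\in\mathbb{R}^{n\times m}$ be a matrix with no zero column such that every nonzero element of $\mathcal{K}_{inner}(\mathcal{A})$ lies in the interior of $\{R^{(k)}p:p\ge0\}$, and every nonzero element of $\{R^{(k)}p:p\ge0\}$ lies in the interior of $\mathcal{K}_{outer}(\mathcal{A})$. Let $R^{(k+1)}:=[R^{(k)},W_1R^{(k)},\dots,W_lR^{(k)}]\in\mathbb{R}^{n\times (l+1)m}$. Then for each $i$, with $\alpha_i:=1/\tau_i-\lambda_i$, there exists a matrix $P_i\in\mathbb{R}^{(l+1)m\times m}$ with all entries strictly positive such that $$(\alpha_iI+A_i)R^{(k)}=R^{(k+1)}P_i.$$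
   Context: Inequalities are entrywise. A real square matrix $A$ has a strictly dominant eigenvalue if it has a real, algebraically simple eigenvalue $\lambda$ with $\operatorname{Re}\mu<\lambda$ for every other eigenvalue $\mu$. Construction of $\tilde r_i,\tilde h_i$: for each $i$ let $\hat r_i,\hat h_i$ be nonzero right and left eigenvectors of $A_i$ for $\lambda_i$; set $\tilde h_1:=\hat h_1$; for each $k$ choose $\tilde r_k\in\{\hat r_k,-\hat r_k\}$ with $\langle\tilde h_1,\tilde r_k\rangle\ge0$; for $j>1$ choose $\tilde h_j\in\{\hat h_j,-\hat h_j\}$ with $\langle\tilde h_j,\tilde r_j\rangle\ge0$. $\tilde R$ is the $n\times l$ matrix with columns $\tilde r_k$, $\tilde H$ the $l\times n$ matrix with rows $\tilde h_j^T$. *)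

theory Defs
  imports "HOL-Analysis.Analysis" "HOL-Computational_Algebra.Polynomial"
begin

definition charpoly :: "real^'n^'n \<Rightarrow> complex poly" where
  "charpoly A = det (mat [:0, 1:] - (\<chi> i j. [:complex_of_real (A $ i $ j):]))"

definition strictly_dominant_eigenvalue :: "real^'n^'n \<Rightarrow> real \<Rightarrow> bool" where
  "strictly_dominant_eigenvalue A lam \<longleftrightarrow>
     poly (charpoly A) (complex_of_real lam) = 0 \<and>
     order (complex_of_real lam) (charpoly A) = 1 \<and>
     (\<forall>mu. poly (charpoly A) mu = 0 \<and> mu \<noteq> complex_of_real lam \<longrightarrow> Re mu < lam)"

definition outer :: "real^'n \<Rightarrow> real^'n \<Rightarrow> real^'n^'n" where
  "outer r h = (\<chi> a b. r $ a * h $ b)"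

definition col_cone :: "(nat \<Rightarrow> real^'n) \<Rightarrow> nat \<Rightarrow> (real^'n) set" where
  "col_cone c m = {(\<Sum>j<m. p j *\<^sub>R c j) | p. \<forall>j<m. p j \<ge> 0}"

definition row_cone :: "(nat \<Rightarrow> real^'n) \<Rightarrow> nat \<Rightarrow> (real^'n) set" where
  "row_cone h l = {r. \<forall>j<l. h j \<bullet> r \<ge> 0}"

text \<open>Columns of [R, W_0 R, ..., W_(l-1) R] (0-based W), where R has m columns:
  column b*m + j is R j for b = 0 and W_(b-1) R j for b \<ge> 1.\<close>
definition next_cols :: "(nat \<Rightarrow> real^'n^'n) \<Rightarrow> (nat \<Rightarrow> real^'n) \<Rightarrow> nat \<Rightarrow> nat \<Rightarrow> real^'n" where
  "next_cols W R m q = (if q < m then R q else W (q div m - 1) *v R (q mod m))"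

end

theory Submission
  imports Defs
begin

lemma interior_shift:
  fixes K :: "('a::real_normed_vector) set"
  assumes "r \<in> interior K"
  shows "\<exists>d>0. r - d *\<^sub>R T \<in> K"
proof -
  obtain e where e: "e > 0" "ball r e \<subseteq> K" using assms mem_interior by blast
  define d where "d = e / (norm T + 1)"
  have d: "d > 0" using e unfolding d_def by (intro divide_pos_pos) (auto intro: add_nonneg_pos)
  have "norm (d *\<^sub>R T) < e"
  proof -
    have "norm (d *\<^sub>R T) = d * norm T" using d by simp
    also have "\<dots> < d * (norm T + 1)" using d by simp
    also have "\<dots> = e" unfolding d_def
      by (metis add_nonneg_pos nonzero_mult_div_cancel_right norm_ge_zero zero_less_one less_irrefl times_divide_eq_left)
    finally show ?thesis .
  qed
  then have "r - d *\<^sub>R T \<in> ball r e" by (simp add: dist_norm)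
  then show ?thesis using d e by blast
qed

lemma col_in_cone:
  assumes "b < m" shows "R b \<in> col_cone R m"
proof -
  have "(\<Sum>j<m. (if j = b then 1 else 0) *\<^sub>R R j) = (\<Sum>j<m. if j = b then R j else 0)"
    by (rule sum.cong) auto
  then have "R b = (\<Sum>j<m. (if j = b then 1 else 0) *\<^sub>R R j)"
    using assms by simp
  then show ?thesis unfolding col_cone_def by force
qed

lemma outer_mult: "outer r h *v x = (h \<bullet> x) *\<^sub>R r"
  by (simp add: vec_eq_iff outer_def matrix_vector_mult_def inner_vec_def sum_distrib_left mult.assoc mult.commute mult.left_commute)

theorem mainTheorem6:
  fixes A :: "nat \<Rightarrow> real^'n^'n" and lam :: "nat \<Rightarrow> real" and l m :: nat
    and rt ht :: "nat \<Rightarrow> real^'n" and tau w :: "nat \<Rightarrow> real"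
    and R :: "nat \<Rightarrow> real^'n"
  assumes dom: "\<forall>i<l. strictly_dominant_eigenvalue (A i) (lam i)"
    and rt_eig: "\<forall>i<l. rt i \<noteq> 0 \<and> A i *v rt i = lam i *\<^sub>R rt i"
    and ht_eig: "\<forall>i<l. ht i \<noteq> 0 \<and> ht i v* A i = lam i *\<^sub>R ht i"
    and sign1: "\<forall>k<l. ht 0 \<bullet> rt k \<ge> 0"
    and sign2: "\<forall>j<l. ht j \<bullet> rt j \<ge> 0"
    and tau_pos: "\<forall>i<l. tau i > 0" and w_pos: "\<forall>i<l. w i > 0"
    and R_nz: "\<forall>j<m. R j \<noteq> 0"
    and inner_in: "\<forall>x\<in>col_cone rt l. x \<noteq> 0 \<longrightarrow> x \<in> interior (col_cone R m)"
    and outer_in: "\<forall>x\<in>col_cone R m. x \<noteq> 0 \<longrightarrow> x \<in> interior (row_cone ht l)"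
  shows "\<forall>i<l. \<exists>P :: nat \<Rightarrow> nat \<Rightarrow> real.
           (\<forall>a<(l+1)*m. \<forall>b<m. P a b > 0) \<and>
           (\<forall>b<m. ((1 / tau i - lam i) *\<^sub>R mat 1 + A i) *v R b =
              (\<Sum>a<(l+1)*m. P a b *\<^sub>R
                 next_cols (\<lambda>j. (mat 1 + tau j *\<^sub>R (A j - lam j *\<^sub>R mat 1))
                                   - w j *\<^sub>R outer (rt j) (ht j)) R m a))"
proof (intro allI impI)
  fix i assume il: "i < l"
  define Wf where "Wf = (\<lambda>j. (mat 1 + tau j *\<^sub>R (A j - lam j *\<^sub>R mat 1))
                                   - w j *\<^sub>R outer (rt j) (ht j))"
  define col where "col = next_cols Wf R m"
  define S where "S = (\<Sum>a\<in>{m..<(l+1)*m}. col a)"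
  define u where "u = (\<Sum>j<m. R j)"
  have tau: "tau i > 0" and wi: "w i > 0" using il tau_pos w_pos by auto
  have "rt i \<in> col_cone rt l" by (rule col_in_cone[OF il])
  then have rint: "rt i \<in> interior (col_cone R m)" using inner_in rt_eig il by blast
  have key: "\<exists>f. (\<forall>a<(l+1)*m. f a > 0) \<and>
      ((1 / tau i - lam i) *\<^sub>R mat 1 + A i) *v R b = (\<Sum>a<(l+1)*m. f a *\<^sub>R col a)"
    if bm: "b < m" for b
  proof -
    have "R b \<in> interior (row_cone ht l)"
      using outer_in col_in_cone[OF bm] R_nz bm by blast
    then obtain d where d: "d > 0" "R b - d *\<^sub>R ht i \<in> row_cone ht l"
      using interior_shift by blast
    then have "ht i \<bullet> (R b - d *\<^sub>R ht i) \<ge> 0" using il unfolding row_cone_def by blast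
    then have hle: "d * (ht i \<bullet> ht i) \<le> ht i \<bullet> R b" by (simp add: inner_diff_right)
    have "ht i \<bullet> ht i > 0" using ht_eig il by simp
    then have hpos: "ht i \<bullet> R b > 0" using hle d by (smt (verit) mult_pos_pos)
    define c where "c = w i / tau i * (ht i \<bullet> R b)"
    have c: "c > 0" using hpos tau wi by (simp add: c_def)
    obtain e where e: "e > 0" "rt i - e *\<^sub>R (u + (1/c) *\<^sub>R S) \<in> col_cone R m"
      using interior_shift[OF rint] by blast
    then obtain p where p: "\<forall>j<m. p j \<ge> 0"
      "rt i - e *\<^sub>R (u + (1/c) *\<^sub>R S) = (\<Sum>j<m. p j *\<^sub>R R j)"
      unfolding col_cone_def by blast
    have ri: "rt i = (\<Sum>j<m. (p j + e) *\<^sub>R R j) + (e / c) *\<^sub>R S"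
    proof -
      have "rt i = (\<Sum>j<m. p j *\<^sub>R R j) + e *\<^sub>R u + (e/c) *\<^sub>R S"
        using p(2) c by (simp add: algebra_simps)
      then show ?thesis by (simp add: u_def scaleR_sum_right algebra_simps sum.distrib)
    qed
    have sm: "\<And>k M (x::real^'n). (k *\<^sub>R M) *v x = k *\<^sub>R (M *v x)"
      by (simp add: vec_eq_iff matrix_vector_mult_def sum_distrib_left mult.assoc)
    have ident: "((1 / tau i - lam i) *\<^sub>R mat 1 + A i) *v R b
        = (1 / tau i) *\<^sub>R (Wf i *v R b) + c *\<^sub>R rt i"
      using tau
      by (simp add: Wf_def c_def matrix_vector_mult_add_rdistrib matrix_vector_mult_diff_rdistrib
          outer_mult sm algebra_simps)
    define f where "f a = (if a < m then c * (p a + e) else e + (if a = (i+1)*m + b then 1 / tau i else 0))" for a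
    have fpos: "\<forall>a<(l+1)*m. f a > 0"
    proof (intro allI impI)
      fix a assume "a < (l+1)*m"
      show "f a > 0"
      proof (cases "a < m")
        case True
        then have "p a + e > 0" using p(1) e by (smt (verit))
        then show ?thesis using True c by (simp add: f_def)
      next
        case False
        then show ?thesis using e tau by (simp add: f_def add_pos_nonneg)
      qed
    qed
    have split: "{..<(l+1)*m} = {..<m} \<union> {m..<(l+1)*m}" by auto
    have idx: "(i+1)*m + b \<in> {m..<(l+1)*m}"
    proof -
      have "(i+1)*m + b < (i+1)*m + m" using bm by simp
      also have "\<dots> = (i+2)*m" by simp
      also have "\<dots> \<le> (l+1)*m" using il by (intro mult_right_mono) auto
      finally show ?thesis by simp
    qed
    have colidx: "col ((i+1)*m + b) = Wf i *v R b"
    proof -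
      have "((i+1)*m + b) div m = i+1" 
      proof -
        have m0: "m \<noteq> 0" using bm by simp
        have "((i+1)*m + b) div m = (b + (i+1)*m) div m" by (simp add: add.commute)
        also have "\<dots> = (i+1) + b div m" using div_mult_self2[OF m0, of b "i+1"] by (simp add: mult.commute)
        finally show ?thesis using bm by simp
      qed
      moreover have "((i+1)*m + b) mod m = b" 
      proof -
        have "((i+1)*m + b) mod m = (b + (i+1)*m) mod m" by (simp add: add.commute)
        also have "\<dots> = b mod m" by (simp only: mod_mult_self1)
        finally show ?thesis using bm by simp
      qed
      moreover have "\<not> (i+1)*m + b < m" by simp
      ultimately show ?thesis unfolding col_def next_cols_def by simp
    qed
    have s2: "(\<Sum>a\<in>{m..<(l+1)*m}. f a *\<^sub>R col a)
        = e *\<^sub>R S + (1 / tau i) *\<^sub>R (Wf i *v R b)"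
    proof -
      have "(\<Sum>a\<in>{m..<(l+1)*m}. f a *\<^sub>R col a)
          = (\<Sum>a\<in>{m..<(l+1)*m}. e *\<^sub>R col a + (if a = (i+1)*m + b then (1/tau i) *\<^sub>R col a else 0))"
        by (rule sum.cong) (auto simp: f_def algebra_simps)
      also have "\<dots> = e *\<^sub>R S + (1/tau i) *\<^sub>R col ((i+1)*m + b)"
        using idx by (simp add: sum.distrib S_def scaleR_sum_right)
      finally show ?thesis using colidx by simp
    qed
    have s1: "(\<Sum>a<m. f a *\<^sub>R col a) = c *\<^sub>R (\<Sum>j<m. (p j + e) *\<^sub>R R j)"
      by (simp add: f_def col_def next_cols_def scaleR_sum_right)
    have "(\<Sum>a<(l+1)*m. f a *\<^sub>R col a) = (\<Sum>a<m. f a *\<^sub>R col a) + (\<Sum>a\<in>{m..<(l+1)*m}. f a *\<^sub>R col a)"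
      unfolding split by (rule sum.union_disjoint) auto
    also have "\<dots> = c *\<^sub>R rt i + (1 / tau i) *\<^sub>R (Wf i *v R b)"
      using s1 s2 ri c by (simp add: algebra_simps)
    finally show ?thesis using ident fpos by (intro exI[of _ f]) (simp add: algebra_simps)
  qed
  then have "\<forall>b. \<exists>f. b < m \<longrightarrow> (\<forall>a<(l+1)*m. f a > 0) \<and>
      ((1 / tau i - lam i) *\<^sub>R mat 1 + A i) *v R b = (\<Sum>a<(l+1)*m. f a *\<^sub>R col a)" by blast
  then obtain F where F: "\<And>b. b < m \<Longrightarrow> (\<forall>a<(l+1)*m. F b a > 0) \<and>
      ((1 / tau i - lam i) *\<^sub>R mat 1 + A i) *v R b = (\<Sum>a<(l+1)*m. F b a *\<^sub>R col a)"
    by metis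
  show "\<exists>P :: nat \<Rightarrow> nat \<Rightarrow> real.
           (\<forall>a<(l+1)*m. \<forall>b<m. P a b > 0) \<and>
           (\<forall>b<m. ((1 / tau i - lam i) *\<^sub>R mat 1 + A i) *v R b =
              (\<Sum>a<(l+1)*m. P a b *\<^sub>R
                 next_cols (\<lambda>j. (mat 1 + tau j *\<^sub>R (A j - lam j *\<^sub>R mat 1))
                                   - w j *\<^sub>R outer (rt j) (ht j)) R m a))"
    using F by (intro exI[of _ "\<lambda>a b. F b a"]) (simp add: col_def Wf_def)
qed

end
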